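(* Let $X$ be a $\mathcal K$-analytic space and $Y\supset X$ a space. Then \[ \mathrm{Compl}_{\mathrm{loc}}(X,Y)\le\mathrm{Compl}_{\overline{\mathrm{loc}}}(X,Y)\le\mathrm{Compl}(X,Y)\le\mathrm{Compl}_{\mathrm{loc}}(X,Y)+1. \] Moreover, if $\mathrm{Compl}_{\mathrm{loc}}(X,Y)$ is odd or $\mathrm{Compl}(X,Y)$ is even, then $\mathrm{Compl}_{\mathrm{loc}}(X,Y)=\mathrm{Compl}_{\overline{\mathrm{loc}}}(X,Y)=\mathrm{Compl}(X,Y)$. If $Y$ is compact, then $\mathrm{Compl}(X,Y)=\mathrm{Compl}_{\overline{\mathrm{loc}}}(X,Y)=\max_{y\in Y}\mathrm{Compl}_y(X,Y)$.
   Context: All spaces are Tychonoff. $\mathcal F$-Borel hierarchy: $\mathcal F_0(Y)$ closed sets; for $0<\alpha<\omega_1$, $\mathcal F_\alpha(Y)$ = countable unions (odd $\alpha$) or countable intersections (even $\alpha$) of members of $\bigcup_{\beta<\alpha}\mathcal F_\beta(Y)$ (parity of $\lambda+m$, $\lambda$ limit or $0$, is that of $m$); $\mathcal F_{\omega_1}(Y)$ = Suslin-$\mathcal F$ sets $\bigcup_{\sigma\in\omega^\omega}\bigcap_k F_{\sigma(0),\dots,\sigma(k)}$ with closed $F$'s. A space is $\mathcal K$-analytic if it is Suslin-$\mathcal F$ in some compact space; then $X\in\mathcal F_{\omega_1}(Y)$ for every $Y\supset X$. $\mathrm{Compl}(A,Y)$ = least $\alpha\le\omega_1$ with $A\in\mathcal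 F_\alpha(Y)$. Local complexity: for $y\in Y$, $\mathrm{Compl}_y(X,Y)=\min\{\mathrm{Compl}(\overline U^Y\cap X,Y): U$ a neighborhood of $y$ in $Y\}$; $\mathrm{Compl}_{\mathrm{loc}}(X,Y)=\sup_{x\in X}\mathrm{Compl}_x(X,Y)$; $\mathrm{Compl}_{\overline{\mathrm{loc}}}(X,Y)=\sup_{y\in Y}\mathrm{Compl}_y(X,Y)$. *)

theory Defs
  imports "HOL-Analysis.Analysis"
begin

text \<open>Countable ordinals together with omega_1 are modelled by any well-ordered
type whose order type is omega_1 + 1: it has a greatest element (omega_1),
the set of elements below it is uncountable, and every element below it has
only countably many predecessors.\<close>

definition omega1 :: "'o::wellorder" where
  "omega1 = (GREATEST x. True)"

definition omega1_plus_one :: "'o::wellorder itself \<Rightarrow> bool" where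
  "omega1_plus_one T \<longleftrightarrow>
     (\<exists>t::'o. \<forall>x. x \<le> t) \<and>
     uncountable {x::'o. x < omega1} \<and>
     (\<forall>x::'o. x < omega1 \<longrightarrow> countable {y. y < x})"

definition ord_zero :: "'o::wellorder" where
  "ord_zero = (LEAST x. True)"

definition limit_or_zero :: "'o::wellorder \<Rightarrow> bool" where
  "limit_or_zero l \<longleftrightarrow> (\<forall>b<l. \<exists>c. b < c \<and> c < l)"

text \<open>alpha = lambda + m with lambda limit or 0; alpha is odd iff m is odd.\<close>
definition ord_odd :: "'o::wellorder \<Rightarrow> bool" where
  "ord_odd a \<longleftrightarrow> (\<exists>l. limit_or_zero l \<and> l \<le> a \<and> finite {l..<a} \<and> odd (card {l..<a}))"

definition ord_even :: "'o::wellorder \<Rightarrow> bool" where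
  "ord_even a \<longleftrightarrow> \<not> ord_odd a"

text \<open>Successor alpha + 1 (omega_1 + 1 is capped at omega_1, the top element;
this is harmless since all complexities are at most omega_1).\<close>
definition osucc :: "'o::wellorder \<Rightarrow> 'o" where
  "osucc a = (if \<exists>b. a < b then (LEAST b. a < b) else a)"

definition ord_sup :: "'o::wellorder set \<Rightarrow> 'o" where
  "ord_sup S = (LEAST a. \<forall>b\<in>S. b \<le> a)"

definition tychonoff_space :: "'a topology \<Rightarrow> bool" where
  "tychonoff_space Y \<longleftrightarrow> completely_regular_space Y \<and> Hausdorff_space Y"

definition suslinF :: "'a topology \<Rightarrow> 'a set \<Rightarrow> bool" where
  "suslinF Y A \<longleftrightarrow> (\<exists>F :: nat list \<Rightarrow> 'a set.
      (\<forall>s. closedin Y (F s)) \<and>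
      A = (\<Union>\<sigma>::nat\<Rightarrow>nat. \<Inter>k. F (map \<sigma> [0..<Suc k])))"

definition K_analytic_via :: "'a topology \<Rightarrow> 'a set \<Rightarrow> 'b topology \<Rightarrow> ('a \<Rightarrow> 'b) \<Rightarrow> bool" where
  "K_analytic_via Y X K f \<longleftrightarrow>
     compact_space K \<and> Hausdorff_space K \<and>
     embedding_map (subtopology Y X) K f \<and> suslinF K (f ` X)"

inductive Fclass :: "'a topology \<Rightarrow> 'o::wellorder \<Rightarrow> 'a set \<Rightarrow> bool"
  for Y :: "'a topology" where
  closed: "closedin Y A \<Longrightarrow> Fclass Y ord_zero A"
| union: "ord_zero < a \<Longrightarrow> a < omega1 \<Longrightarrow> ord_odd a \<Longrightarrow> countable \<A> \<Longrightarrow>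
           (\<forall>A\<in>\<A>. \<exists>b<a. Fclass Y b A) \<Longrightarrow> Fclass Y a (\<Union>\<A>)"
| inter: "ord_zero < a \<Longrightarrow> a < omega1 \<Longrightarrow> ord_even a \<Longrightarrow> countable \<A> \<Longrightarrow>
           (\<forall>A\<in>\<A>. \<exists>b<a. Fclass Y b A) \<Longrightarrow> Fclass Y a (topspace Y \<inter> \<Inter>\<A>)"
| suslin: "suslinF Y A \<Longrightarrow> Fclass Y omega1 A"

definition Compl :: "'o::wellorder itself \<Rightarrow> 'a topology \<Rightarrow> 'a set \<Rightarrow> 'o" where
  "Compl T Y A = (LEAST a::'o. Fclass Y a A)"

definition neighbourhood :: "'a topology \<Rightarrow> 'a set \<Rightarrow> 'a \<Rightarrow> bool" where
  "neighbourhood Y U y \<longleftrightarrow> U \<subseteq> topspace Y \<and> (\<exists>V. openin Y V \<and> y \<in> V \<and> V \<subseteq> U)"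

definition Compl_at :: "'o::wellorder itself \<Rightarrow> 'a topology \<Rightarrow> 'a set \<Rightarrow> 'a \<Rightarrow> 'o" where
  "Compl_at T Y X y =
     (LEAST a::'o. \<exists>U. neighbourhood Y U y \<and> a = Compl T Y ((Y closure_of U) \<inter> X))"

definition Compl_loc :: "'o::wellorder itself \<Rightarrow> 'a topology \<Rightarrow> 'a set \<Rightarrow> 'o" where
  "Compl_loc T Y X = ord_sup ((\<lambda>x. Compl_at T Y X x) ` X)"

definition Compl_cloc :: "'o::wellorder itself \<Rightarrow> 'a topology \<Rightarrow> 'a set \<Rightarrow> 'o" where
  "Compl_cloc T Y X = ord_sup ((\<lambda>y. Compl_at T Y X y) ` topspace Y)"

end

theory Submission imports Defs begin

lemma compact_nest:
  fixes F :: "nat \<Rightarrow> 'b set"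
  assumes K: "compact_space K" and F: "\<And>k. closedin K (F k)"
    and O: "\<forall>U\<in>\<O>. openin K U" and sub: "(\<Inter>k. F k) \<subseteq> \<Union>\<O>"
  shows "\<exists>\<O>' m. finite \<O>' \<and> \<O>' \<subseteq> \<O> \<and> (\<Inter>k\<in>{..m}. F k) \<subseteq> \<Union>\<O>'"
proof -
  let ?U = "\<O> \<union> range (\<lambda>k. topspace K - F k)"
  have "\<forall>U\<in>?U. openin K U" using O F by auto
  moreover have "topspace K \<subseteq> \<Union>?U" using sub by blast
  ultimately obtain \<G> where G: "finite \<G>" "\<G> \<subseteq> ?U" "topspace K \<subseteq> \<Union>\<G>"
    using K unfolding compact_space_def compactin_def by meson
  have "\<G> - \<O> \<subseteq> (\<lambda>k. topspace K - F k) ` UNIV" using G by blast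
  then obtain N where N: "finite N" "\<G> - \<O> = (\<lambda>k. topspace K - F k) ` N"
    using G(1) finite_subset_image[of "\<G> - \<O>"] by (metis finite_Diff)
  define m where "m = Max (insert 0 N)"
  have mN: "k \<in> N \<Longrightarrow> k \<le> m" for k using N(1) by (simp add: m_def)
  have "(\<Inter>k\<in>{..m}. F k) \<subseteq> \<Union>(\<G> \<inter> \<O>)"
  proof
    fix x assume x: "x \<in> (\<Inter>k\<in>{..m}. F k)"
    then have "x \<in> F 0" by auto
    then have "x \<in> topspace K" using F closedin_subset by blast
    then obtain G' where "G' \<in> \<G>" "x \<in> G'" using G by blast
    moreover have "G' \<notin> \<G> - \<O>"
    proof
      assume "G' \<in> \<G> - \<O>"
      then obtain k where "k \<in> N" "G' = topspace K - F k" using N by blast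
      then show False using x mN \<open>x \<in> G'\<close> by auto
    qed
    ultimately show "x \<in> \<Union>(\<G> \<inter> \<O>)" by blast
  qed
  then show ?thesis using G by blast
qed

lemma suslin_lindelof:
  fixes F :: "nat list \<Rightarrow> 'b set"
  assumes K: "compact_space K" and F: "\<forall>s. closedin K (F s)"
    and U: "\<forall>U\<in>\<U>. openin K U"
    and cov: "(\<Union>\<sigma>. \<Inter>k. F (map \<sigma> [0..<Suc k])) \<subseteq> \<Union>\<U>"
  shows "\<exists>\<V>\<subseteq>\<U>. countable \<V> \<and> (\<Union>\<sigma>. \<Inter>k. F (map \<sigma> [0..<Suc k])) \<subseteq> \<Union>\<V>"
proof (rule ccontr)
  assume nc: "\<not> ?thesis"
  define As where "As s = (\<Union>\<sigma>\<in>{\<sigma>. map \<sigma> [0..<length s] = s}. \<Inter>k. F (map \<sigma> [0..<Suc k]))" for s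
  define bad where "bad s \<longleftrightarrow> \<not>(\<exists>\<V>\<subseteq>\<U>. countable \<V> \<and> As s \<subseteq> \<Union>\<V>)" for s
  have step: "\<exists>n. bad (s@[n])" if bs: "bad s" for s
  proof (rule ccontr)
    assume "\<not> (\<exists>n. bad (s@[n]))"
    then have ch: "\<forall>n. \<exists>\<V>. \<V>\<subseteq>\<U> \<and> countable \<V> \<and> As (s@[n]) \<subseteq> \<Union>\<V>" unfolding bad_def by blast
    obtain V where V0: "\<forall>n. V n \<subseteq> \<U> \<and> countable (V n) \<and> As (s@[n]) \<subseteq> \<Union>(V n)"
      using choice[OF ch] by blast
    then have V: "V n \<subseteq> \<U> \<and> countable (V n) \<and> As (s@[n]) \<subseteq> \<Union>(V n)" for n by blast
    have "As s \<subseteq> (\<Union>n. As (s@[n]))"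
    proof
      fix x assume "x \<in> As s"
      then obtain \<sigma> where s: "map \<sigma> [0..<length s] = s" and x: "x \<in> (\<Inter>k. F (map \<sigma> [0..<Suc k]))"
        unfolding As_def by blast
      have "map \<sigma> [0..<length (s@[\<sigma> (length s)])] = s@[\<sigma> (length s)]" using s by simp
      then show "x \<in> (\<Union>n. As (s@[n]))" using x unfolding As_def by blast
    qed
    also have "\<dots> \<subseteq> \<Union>(\<Union>n. V n)"
    proof (rule UN_least)
      fix n show "As (s@[n]) \<subseteq> \<Union>(\<Union>n. V n)" using V[of n] by blast
    qed
    finally have "As s \<subseteq> \<Union>(\<Union>n. V n)" .
    moreover have "(\<Union>n. V n) \<subseteq> \<U>" using V by blast
    moreover have "countable (\<Union>n. V n)" using V by (simp add: countable_UN)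
    ultimately have "\<exists>\<V>\<subseteq>\<U>. countable \<V> \<and> As s \<subseteq> \<Union>\<V>" by blast
    then show False using bs unfolding bad_def by simp
  qed
  have bad0: "bad []" using nc unfolding bad_def As_def by simp
  define nx where "nx s = (SOME n. bad (s@[n]))" for s
  define sq where "sq = rec_nat [] (\<lambda>k t. t @ [nx t])"
  have sq0: "sq 0 = []" and sqS: "sq (Suc k) = sq k @ [nx (sq k)]" for k by (simp_all add: sq_def)
  have len: "length (sq k) = k" for k by (induction k) (simp_all add: sq0 sqS)
  have badk: "bad (sq k)" for k
  proof (induction k)
    case 0 then show ?case using bad0 sq0 by simp
  next
    case (Suc k)
    have "\<exists>n. bad (sq k @ [n])" using step Suc by blast
    then have "bad (sq k @ [nx (sq k)])" unfolding nx_def by (rule someI_ex)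
    then show ?case by (simp add: sqS)
  qed
  define \<sigma> where "\<sigma> k = sq (Suc k) ! k" for k
  have msq: "map \<sigma> [0..<k] = sq k" for k
  proof (induction k)
    case 0 then show ?case by (simp add: sq0)
  next
    case (Suc k)
    have "\<sigma> k = nx (sq k)" unfolding \<sigma>_def sqS using len by (simp add: nth_append)
    then show ?case using Suc by (simp add: sqS)
  qed
  have "(\<Inter>k. F (sq (Suc k))) \<subseteq> (\<Union>\<sigma>. \<Inter>k. F (map \<sigma> [0..<Suc k]))"
  proof -
    have "(\<Inter>k. F (sq (Suc k))) = (\<Inter>k. F (map \<sigma> [0..<Suc k]))" by (simp del: upt_Suc add: msq)
    then show ?thesis by blast
  qed
  then have "(\<Inter>k. F (sq (Suc k))) \<subseteq> \<Union>\<U>" using cov by blast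
  then obtain \<O>' m where O': "finite \<O>'" "\<O>' \<subseteq> \<U>" "(\<Inter>k\<in>{..m}. F (sq (Suc k))) \<subseteq> \<Union>\<O>'"
  proof -
    have "\<exists>\<O>' m. finite \<O>' \<and> \<O>' \<subseteq> \<U> \<and> (\<Inter>k\<in>{..m}. F (sq (Suc k))) \<subseteq> \<Union>\<O>'"
      by (rule compact_nest[OF K]) (use F U \<open>(\<Inter>k. F (sq (Suc k))) \<subseteq> \<Union>\<U>\<close> in auto)
    then show ?thesis using that by blast
  qed
  have "As (sq (Suc m)) \<subseteq> (\<Inter>k\<in>{..m}. F (sq (Suc k)))"
  proof
    fix x assume "x \<in> As (sq (Suc m))"
    then obtain \<tau> where t0: "map \<tau> [0..<length (sq (Suc m))] = sq (Suc m)" and x: "x \<in> (\<Inter>k. F (map \<tau> [0..<Suc k]))"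
      unfolding As_def by (auto simp del: upt_Suc)
    have t: "map \<tau> [0..<Suc m] = sq (Suc m)" using t0 unfolding len .
    have "map \<tau> [0..<Suc m] = map \<sigma> [0..<Suc m]" using t msq by (simp only: t msq)
    then have eq: "\<tau> i = \<sigma> i" if "i \<le> m" for i
    proof -
      have "map \<tau> [0..<Suc m] ! i = map \<sigma> [0..<Suc m] ! i" using \<open>map \<tau> [0..<Suc m] = map \<sigma> [0..<Suc m]\<close> by (simp only:)
      moreover have "i < Suc m - 0" using that by simp
      then have "map \<tau> [0..<Suc m] ! i = \<tau> (0+i)" "map \<sigma> [0..<Suc m] ! i = \<sigma> (0+i)"
        by (rule nth_map_upt)+
      ultimately show ?thesis by (simp only: add_0)
    qed
    show "x \<in> (\<Inter>k\<in>{..m}. F (sq (Suc k)))"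
    proof
      fix k assume "k \<in> {..m}"
      then have "map \<tau> [0..<Suc k] = map \<sigma> [0..<Suc k]" by (intro map_cong refl) (use eq in auto)
      moreover have "x \<in> F (map \<tau> [0..<Suc k])" using x by blast
      ultimately show "x \<in> F (sq (Suc k))" using msq by (simp del: upt_Suc)
    qed
  qed
  then have "As (sq (Suc m)) \<subseteq> \<Union>\<O>'" using O'(3) by (rule subset_trans)
  moreover have "countable \<O>'" using O'(1) by (rule countable_finite)
  ultimately have "\<exists>\<V>\<subseteq>\<U>. countable \<V> \<and> As (sq (Suc m)) \<subseteq> \<Union>\<V>" using O'(2) by (intro exI[of _ "\<O>'"]) simp
  then show False using badk[of "Suc m"] unfolding bad_def by simp
qed

lemma take_map_upt: "i \<le> k \<Longrightarrow> take (Suc i) (map \<sigma> [0..<Suc k]) = map \<sigma> [0..<Suc i]"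
  by (simp add: take_map take_upt del: upt_Suc)

lemma K_analytic_suslin:
  assumes H: "Hausdorff_space Y" and XY: "X \<subseteq> topspace Y" and KA: "K_analytic_via Y X K f"
  shows "suslinF Y X"
proof -
  have K: "compact_space K" and emb: "embedding_map (subtopology Y X) K f" and sK: "suslinF K (f ` X)"
    using KA unfolding K_analytic_via_def by auto
  obtain F where F: "\<forall>s. closedin K (F s)" and fX: "f ` X = (\<Union>\<sigma>::nat\<Rightarrow>nat. \<Inter>k. F (map \<sigma> [0..<Suc k]))"
    using sK unfolding suslinF_def by blast
  have tX: "topspace (subtopology Y X) = X" using XY by (simp add: inf.absorb2)
  have hom: "homeomorphic_map (subtopology Y X) (subtopology K (f ` X)) f"
    using emb unfolding embedding_map_def tX .
  have inj: "inj_on f X" using hom unfolding homeomorphic_map_def tX by blast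
  have fXK: "f ` X \<subseteq> topspace K"
  proof
    fix z assume "z \<in> f ` X"
    then obtain \<sigma> where "z \<in> (\<Inter>k. F (map \<sigma> [0..<Suc k]))" unfolding fX by blast
    then have "z \<in> F (map \<sigma> [0..<Suc 0])" by blast
    then show "z \<in> topspace K" using F closedin_subset by blast
  qed
  define G where "G s = topspace K \<inter> (\<Inter>i\<in>{..<length s}. F (take (Suc i) s))" for s
  define E where "E s = Y closure_of (X \<inter> f -` G s)" for s
  have Gmem: "z \<in> G (map \<sigma> [0..<Suc k]) \<longleftrightarrow> z \<in> topspace K \<and> (\<forall>i\<le>k. z \<in> F (map \<sigma> [0..<Suc i]))" for z \<sigma> k
  proof -
    have "z \<in> G (map \<sigma> [0..<Suc k]) \<longleftrightarrow> z \<in> topspace K \<and> (\<forall>i<Suc k. z \<in> F (take (Suc i) (map \<sigma> [0..<Suc k])))"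
      unfolding G_def by (auto simp del: upt_Suc)
    also have "\<dots> \<longleftrightarrow> z \<in> topspace K \<and> (\<forall>i\<le>k. z \<in> F (map \<sigma> [0..<Suc i]))"
      using take_map_upt[of _ k \<sigma>] less_Suc_eq_le by auto
    finally show ?thesis .
  qed
  have Ecl: "\<forall>s. closedin Y (E s)" unfolding E_def by simp
  have "X = (\<Union>\<sigma>::nat\<Rightarrow>nat. \<Inter>k. E (map \<sigma> [0..<Suc k]))"
  proof
    show "X \<subseteq> (\<Union>\<sigma>::nat\<Rightarrow>nat. \<Inter>k. E (map \<sigma> [0..<Suc k]))"
    proof
      fix x assume x: "x \<in> X"
      then have "f x \<in> f ` X" by blast
      then obtain \<sigma> where s: "\<And>k. f x \<in> F (map \<sigma> [0..<Suc k])" unfolding fX by blast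
      have "x \<in> E (map \<sigma> [0..<Suc k])" for k
      proof -
        have "f x \<in> G (map \<sigma> [0..<Suc k])" unfolding Gmem using s fXK x by blast
        then have "x \<in> X \<inter> f -` G (map \<sigma> [0..<Suc k])" using x by blast
        moreover have "X \<inter> f -` G (map \<sigma> [0..<Suc k]) \<subseteq> topspace Y" using XY by blast
        ultimately show ?thesis unfolding E_def using closure_of_subset by blast
      qed
      then show "x \<in> (\<Union>\<sigma>::nat\<Rightarrow>nat. \<Inter>k. E (map \<sigma> [0..<Suc k]))" by blast
    qed
  next
    show "(\<Union>\<sigma>::nat\<Rightarrow>nat. \<Inter>k. E (map \<sigma> [0..<Suc k])) \<subseteq> X"
    proof
      fix y assume "y \<in> (\<Union>\<sigma>::nat\<Rightarrow>nat. \<Inter>k. E (map \<sigma> [0..<Suc k]))"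
      then obtain \<sigma> :: "nat \<Rightarrow> nat" where yE: "\<And>k. y \<in> E (map \<sigma> [0..<Suc k])" by blast
      have yY: "y \<in> topspace Y" using yE[of 0] Ecl closedin_subset by blast
      show "y \<in> X"
      proof (rule ccontr)
        assume yX: "y \<notin> X"
        define C where "C = (\<Inter>k. F (map \<sigma> [0..<Suc k]))"
        have CfX: "C \<subseteq> f ` X" unfolding C_def fX by blast
        have "closedin K C" unfolding C_def using F by (intro closedin_Inter) auto
        then have "compactin K C" using K closedin_compact_space by blast
        then have cC: "compactin (subtopology K (f ` X)) C" using CfX compactin_subtopology by blast
        define D where "D = X \<inter> f -` C"
        have fD: "f ` D = C" using CfX unfolding D_def by blast
        have "compactin (subtopology Y X) D"
          using homeomorphic_map_compactness_eq[OF hom, of D] cC fD tX unfolding D_def by auto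
        then have cD: "compactin Y D" using compactin_subtopology by blast
        have "disjnt D {y}" using yX unfolding D_def disjnt_def by blast
        then obtain V W where VW: "openin Y V" "openin Y W" "D \<subseteq> V" "{y} \<subseteq> W" "disjnt V W"
          using Hausdorff_space_compact_separation[OF H cD] yY by (metis compactin_sing)
        have "openin (subtopology Y X) (X \<inter> V)" using VW(1) by (rule openin_subtopology_Int2)
        then have "openin (subtopology K (f ` X)) (f ` (X \<inter> V))"
          using homeomorphic_map_openness[OF hom] tX by (metis inf_le1)
        then obtain Op where Op: "openin K Op" "f ` (X \<inter> V) = Op \<inter> f ` X"
          unfolding openin_subtopology by blast
        have CO: "C \<subseteq> Op"
        proof
          fix c assume c: "c \<in> C"
          then obtain d where d: "d \<in> X" "c = f d" using CfX by blast
          then have "d \<in> D" unfolding D_def using c by blast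
          then have "c \<in> f ` (X \<inter> V)" using d VW(3) by blast
          then show "c \<in> Op" using Op(2) by blast
        qed
        obtain \<O>' m where Om: "finite \<O>'" "\<O>' \<subseteq> {Op}" "(\<Inter>k\<in>{..m}. F (map \<sigma> [0..<Suc k])) \<subseteq> \<Union>\<O>'"
        proof -
          have "\<exists>\<O>' m. finite \<O>' \<and> \<O>' \<subseteq> {Op} \<and> (\<Inter>k\<in>{..m}. F (map \<sigma> [0..<Suc k])) \<subseteq> \<Union>\<O>'"
            by (rule compact_nest[OF K]) (use F Op(1) CO in \<open>auto simp: C_def simp del: upt_Suc\<close>)
          then show ?thesis using that by blast
        qed
        have sub: "X \<inter> f -` G (map \<sigma> [0..<Suc m]) \<subseteq> V"
        proof
          fix e assume e: "e \<in> X \<inter> f -` G (map \<sigma> [0..<Suc m])"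
          then have "\<forall>i\<le>m. f e \<in> F (map \<sigma> [0..<Suc i])" using Gmem by blast
          then have "f e \<in> (\<Inter>k\<in>{..m}. F (map \<sigma> [0..<Suc k]))" by blast
          then have "f e \<in> Op" using Om(2,3) by blast
          then have "f e \<in> f ` (X \<inter> V)" using Op(2) e by blast
          then obtain v where v: "v \<in> X \<inter> V" "f e = f v" by blast
          then have "e = v" using inj e unfolding inj_on_def by blast
          then show "e \<in> V" using v by blast
        qed
        have "y \<in> Y closure_of V"
          using yE[of m] closure_of_mono[OF sub] unfolding E_def by blast
        then show False using VW(2,4,5) unfolding in_closure_of disjnt_def by blast
      qed
    qed
  qed
  then show ?thesis unfolding suslinF_def using Ecl by blast
qed


lemma omega1_top: "\<exists>t::'o::wellorder. \<forall>x. x \<le> t \<Longrightarrow> (x::'o) \<le> omega1"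
proof -
  assume "\<exists>t::'o. \<forall>x. x \<le> t"
  then obtain t :: 'o where t: "\<forall>x. x \<le> t" by blast
  have "omega1 = t" unfolding omega1_def by (rule Greatest_equality) (use t in auto)
  then show ?thesis using t by simp
qed

lemma ord_zero_le: "(ord_zero::'o::wellorder) \<le> x"
  unfolding ord_zero_def by (rule Least_le) simp

lemma osucc_least: "a < b \<Longrightarrow> osucc a \<le> (b::'o::wellorder)"
  unfolding osucc_def by (auto intro: Least_le)

lemma osucc_gt: "a < b \<Longrightarrow> a < osucc (a::'o::wellorder)"
  unfolding osucc_def by (auto intro: LeastI)

lemma osucc_ge: "a \<le> osucc (a::'o::wellorder)"
  by (metis order.strict_implies_order order_refl osucc_def osucc_gt)

lemma less_osucc: "x < osucc a \<Longrightarrow> x \<le> (a::'o::wellorder)"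
  by (metis leD leI osucc_least)

lemma osucc_less_omega1:
  assumes top: "\<exists>t::'o::wellorder. \<forall>x. x \<le> t" and unc: "uncountable {x::'o. x < omega1}"
    and cnt: "\<forall>x::'o. x < omega1 \<longrightarrow> countable {y. y < x}" and a: "(a::'o) < omega1"
  shows "osucc a < omega1"
proof (rule ccontr)
  assume "\<not> osucc a < omega1"
  then have eq: "osucc a = omega1" using omega1_top[OF top, of "osucc a"] by simp
  have "{x::'o. x < omega1} \<subseteq> insert a {y. y < a}"
    using less_osucc[of _ a] eq by fastforce
  moreover have "countable (insert a {y. y < a})" using cnt a by simp
  ultimately show False using unc countable_subset by blast
qed

lemma lambda_exists: "\<exists>l. limit_or_zero l \<and> l \<le> a \<and> finite {l..<(a::'o::wellorder)}"
proof -
  define l where "l = (LEAST l. l \<le> a \<and> finite {l..<a})"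
  have P: "l \<le> a \<and> finite {l..<a}" unfolding l_def by (rule LeastI[of _ a]) simp
  have "limit_or_zero l"
    unfolding limit_or_zero_def
  proof (intro allI impI)
    fix b assume b: "b < l"
    show "\<exists>c. b < c \<and> c < l"
    proof (rule ccontr)
      assume nc: "\<not> (\<exists>c. b < c \<and> c < l)"
      have "{b..<a} = insert b {l..<a}"
      proof
        show "{b..<a} \<subseteq> insert b {l..<a}"
        proof
          fix x assume x: "x \<in> {b..<a}"
          show "x \<in> insert b {l..<a}"
          proof (cases "x = b")
            case False
            then have "b < x" using x by auto
            then have "l \<le> x" using nc by (meson not_le)
            then show ?thesis using x by auto
          qed simp
        qed
        show "insert b {l..<a} \<subseteq> {b..<a}" using b P by auto
      qed
      then have "b \<le> a \<and> finite {b..<a}" using P b by auto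
      then have "l \<le> b" unfolding l_def by (rule Least_le)
      then show False using b by simp
    qed
  qed
  then show ?thesis using P by blast
qed

lemma osucc_odd:
  assumes ev: "ord_even (a::'o::wellorder)" and ab: "a < b"
  shows "ord_odd (osucc a)"
proof -
  obtain l where l: "limit_or_zero l" "l \<le> a" "finite {l..<a}" using lambda_exists by blast
  have "even (card {l..<a})" using ev l unfolding ord_even_def ord_odd_def by blast
  have gt: "a < osucc a" using osucc_gt[OF ab] .
  have eq: "{l..<osucc a} = insert a {l..<a}"
    using l(2) gt less_osucc[of _ a] by (auto simp: order.strict_iff_order)
  have "card {l..<osucc a} = Suc (card {l..<a})" unfolding eq using l(3) by simp
  then show ?thesis unfolding ord_odd_def
    using l \<open>even (card {l..<a})\<close> gt eq by (intro exI[of _ l]) auto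
qed

lemma zero_even: "ord_even (ord_zero::'o::wellorder)"
  unfolding ord_even_def ord_odd_def
proof
  assume "\<exists>l. limit_or_zero l \<and> l \<le> (ord_zero::'o) \<and> finite {l..<ord_zero} \<and> odd (card {l..<ord_zero})"
  then obtain l :: 'o where "l \<le> ord_zero" "odd (card {l..<ord_zero})" by blast
  moreover have "l = ord_zero" using ord_zero_le[of l] \<open>l \<le> ord_zero\<close> by simp
  ultimately show False by simp
qed

lemma odd_pos: "ord_odd (a::'o::wellorder) \<Longrightarrow> ord_zero < a"
  using zero_even[where 'o='o] ord_zero_le[of a] unfolding ord_even_def
  by (metis order.not_eq_order_implies_strict)

lemma Fclass_sub: "Fclass Y a A \<Longrightarrow> A \<subseteq> topspace Y"
proof (induction rule: Fclass.induct)
  case (closed A) then show ?case by (simp add: closedin_subset)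
next
  case (union a \<A>) then show ?case by blast
next
  case (inter a \<A>) then show ?case by blast
next
  case (suslin A)
  then obtain F where F: "\<forall>s. closedin Y (F s)" and A: "A = (\<Union>\<sigma>::nat\<Rightarrow>nat. \<Inter>k. F (map \<sigma> [0..<Suc k]))"
    unfolding suslinF_def by blast
  show ?case
  proof
    fix x assume "x \<in> A"
    then obtain \<sigma> :: "nat \<Rightarrow> nat" where "x \<in> (\<Inter>k. F (map \<sigma> [0..<Suc k]))" unfolding A by blast
    then have "x \<in> F (map \<sigma> [0..<Suc 0])" by blast
    then show "x \<in> topspace Y" using F closedin_subset by blast
  qed
qed

lemma Fclass_mono:
  assumes A: "Fclass Y b A" and bc: "b \<le> c" and c: "c < omega1"
  shows "Fclass Y c A"
proof (cases "b = c")
  case True then show ?thesis using A by simp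
next
  case False
  then have bc': "b < c" using bc by simp
  then have c0: "ord_zero < c" using ord_zero_le[of b] by (meson le_less_trans)
  show ?thesis
  proof (cases "ord_odd c")
    case True
    have "Fclass Y c (\<Union>{A})"
      by (rule Fclass.union[OF c0 c True]) (use A bc' in auto)
    then show ?thesis by simp
  next
    case False
    then have ev: "ord_even c" unfolding ord_even_def .
    have "Fclass Y c (topspace Y \<inter> \<Inter>{A})"
      by (rule Fclass.inter[OF c0 c ev]) (use A bc' in auto)
    moreover have "topspace Y \<inter> \<Inter>{A} = A" using Fclass_sub[OF A] by auto
    ultimately show ?thesis by simp
  qed
qed

lemma Fclass_cases_lt:
  assumes "Fclass Y a A" "a < omega1"
  shows "(a = ord_zero \<and> closedin Y A)
    \<or> (ord_zero < a \<and> ord_odd a \<and> (\<exists>\<A>. countable \<A> \<and> (\<forall>A\<in>\<A>. \<exists>b<a. Fclass Y b A) \<and> A = \<Union>\<A>))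
    \<or> (ord_zero < a \<and> ord_even a \<and> (\<exists>\<A>. countable \<A> \<and> (\<forall>A\<in>\<A>. \<exists>b<a. Fclass Y b A) \<and> A = topspace Y \<inter> \<Inter>\<A>))"
  using assms(1)
proof (cases rule: Fclass.cases)
  case closed then show ?thesis by (intro disjI1) simp
next
  case (union \<A>)
  then have "ord_zero < a \<and> ord_odd a \<and> (\<exists>\<A>. countable \<A> \<and> (\<forall>A\<in>\<A>. \<exists>b<a. Fclass Y b A) \<and> A = \<Union>\<A>)"
    by blast
  then show ?thesis by (intro disjI2 disjI1)
next
  case (inter \<A>)
  then have "ord_zero < a \<and> ord_even a \<and> (\<exists>\<A>. countable \<A> \<and> (\<forall>A\<in>\<A>. \<exists>b<a. Fclass Y b A) \<and> A = topspace Y \<inter> \<Inter>\<A>)"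
    by blast
  then show ?thesis by (intro disjI2)
next
  case suslin then show ?thesis using assms(2) by simp
qed

lemma Fclass_Un:
  assumes "a < omega1"
  shows "Fclass Y a A \<Longrightarrow> Fclass Y a B \<Longrightarrow> Fclass Y a (A \<union> B)"
  using assms
proof (induction a arbitrary: A B rule: less_induct)
  case (less a)
  note cA = Fclass_cases_lt[OF less.prems(1) less.prems(3)]
  note cB = Fclass_cases_lt[OF less.prems(2) less.prems(3)]
  consider (z) "a = ord_zero" | (o) "ord_zero < a" "ord_odd a" | (e) "ord_zero < a" "ord_even a"
    using ord_zero_le[of a] ord_even_def by (metis order.not_eq_order_implies_strict)
  then show ?case
  proof cases
    case z
    then have "closedin Y A" "closedin Y B" using cA cB by auto
    then show ?thesis using z Fclass.closed by blast
  next
    case o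
    obtain \<A> where A: "countable \<A>" "\<forall>A\<in>\<A>. \<exists>b<a. Fclass Y b A" "A = \<Union>\<A>"
      using cA o ord_even_def by auto
    obtain \<B> where B: "countable \<B>" "\<forall>A\<in>\<B>. \<exists>b<a. Fclass Y b A" "B = \<Union>\<B>"
      using cB o ord_even_def by auto
    have "Fclass Y a (\<Union>(\<A> \<union> \<B>))"
      by (rule Fclass.union[OF o(1) less.prems(3) o(2)]) (use A B in auto)
    then show ?thesis using A B by simp
  next
    case e
    obtain \<A> where A: "countable \<A>" "\<forall>A\<in>\<A>. \<exists>b<a. Fclass Y b A" "A = topspace Y \<inter> \<Inter>\<A>"
      using cA e ord_even_def by auto
    obtain \<B> where B: "countable \<B>" "\<forall>A\<in>\<B>. \<exists>b<a. Fclass Y b A" "B = topspace Y \<inter> \<Inter>\<B>"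
      using cB e ord_even_def by auto
    define \<C> where "\<C> = (\<lambda>(P,Q). P \<union> Q) ` (\<A> \<times> \<B>)"
    have cC: "countable \<C>" unfolding \<C>_def using A(1) B(1) by simp
    have mC: "\<forall>C\<in>\<C>. \<exists>b<a. Fclass Y b C"
    proof
      fix C assume "C \<in> \<C>"
      then obtain P Q where PQ: "P \<in> \<A>" "Q \<in> \<B>" "C = P \<union> Q" unfolding \<C>_def by blast
      obtain b1 b2 where b: "b1 < a" "Fclass Y b1 P" "b2 < a" "Fclass Y b2 Q" using PQ A(2) B(2) by blast
      define m where "m = max b1 b2"
      have m: "m < a" "m < omega1" using b less.prems(3) unfolding m_def by auto
      have "Fclass Y m P" "Fclass Y m Q"
        using Fclass_mono[OF b(2) _ m(2)] Fclass_mono[OF b(4) _ m(2)] unfolding m_def by auto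
      then have "Fclass Y m C" using less.IH[OF m(1)] m(2) PQ(3) by blast
      then show "\<exists>b<a. Fclass Y b C" using m(1) by blast
    qed
    have "Fclass Y a (topspace Y \<inter> \<Inter>\<C>)"
      by (rule Fclass.inter[OF e(1) less.prems(3) e(2) cC mC])
    moreover have "topspace Y \<inter> \<Inter>\<C> = A \<union> B"
    proof
      show "topspace Y \<inter> \<Inter>\<C> \<subseteq> A \<union> B"
      proof
        fix x assume x: "x \<in> topspace Y \<inter> \<Inter>\<C>"
        show "x \<in> A \<union> B"
        proof (rule ccontr)
          assume "x \<notin> A \<union> B"
          then obtain P Q where "P \<in> \<A>" "x \<notin> P" "Q \<in> \<B>" "x \<notin> Q" using x A(3) B(3) by blast
          then have "P \<union> Q \<in> \<C>" "x \<notin> P \<union> Q" unfolding \<C>_def by auto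
          then show False using x by blast
        qed
      qed
      show "A \<union> B \<subseteq> topspace Y \<inter> \<Inter>\<C>" using A(3) B(3) unfolding \<C>_def by auto
    qed
    ultimately show ?thesis by simp
  qed
qed

lemma suslin_Int_closed:
  assumes "suslinF Y A" "closedin Y C"
  shows "suslinF Y (C \<inter> A)"
proof -
  obtain F where F: "\<forall>s. closedin Y (F s)" and A: "A = (\<Union>\<sigma>::nat\<Rightarrow>nat. \<Inter>k. F (map \<sigma> [0..<Suc k]))"
    using assms(1) unfolding suslinF_def by blast
  have "C \<inter> A = (\<Union>\<sigma>::nat\<Rightarrow>nat. \<Inter>k. C \<inter> F (map \<sigma> [0..<Suc k]))"
  proof
    show "C \<inter> A \<subseteq> (\<Union>\<sigma>::nat\<Rightarrow>nat. \<Inter>k. C \<inter> F (map \<sigma> [0..<Suc k]))"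
    proof
      fix x assume "x \<in> C \<inter> A"
      then obtain \<sigma> :: "nat \<Rightarrow> nat" where "x \<in> C" "\<And>k. x \<in> F (map \<sigma> [0..<Suc k])" unfolding A by blast
      then have "x \<in> (\<Inter>k. C \<inter> F (map \<sigma> [0..<Suc k]))" by blast
      then show "x \<in> (\<Union>\<sigma>::nat\<Rightarrow>nat. \<Inter>k. C \<inter> F (map \<sigma> [0..<Suc k]))" by blast
    qed
    show "(\<Union>\<sigma>::nat\<Rightarrow>nat. \<Inter>k. C \<inter> F (map \<sigma> [0..<Suc k])) \<subseteq> C \<inter> A"
    proof
      fix x assume "x \<in> (\<Union>\<sigma>::nat\<Rightarrow>nat. \<Inter>k. C \<inter> F (map \<sigma> [0..<Suc k]))"
      then obtain \<sigma> :: "nat \<Rightarrow> nat" where s: "\<And>k. x \<in> C \<inter> F (map \<sigma> [0..<Suc k])" by blast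
      then have "x \<in> C" using s[of 0] by blast
      moreover have "x \<in> (\<Inter>k. F (map \<sigma> [0..<Suc k]))" using s by blast
      ultimately show "x \<in> C \<inter> A" unfolding A by blast
    qed
  qed
  moreover have "\<forall>s. closedin Y (C \<inter> F s)" using F assms(2) by auto
  ultimately have "(\<forall>s. closedin Y (C \<inter> F s)) \<and> C \<inter> A = (\<Union>\<sigma>::nat\<Rightarrow>nat. \<Inter>k. C \<inter> F (map \<sigma> [0..<Suc k]))"
    by blast
  then show ?thesis unfolding suslinF_def by (rule exI[where x="\<lambda>s. C \<inter> F s"])
qed

lemma Fclass_countable_union:
  assumes a: "a < omega1" and top: "\<exists>t::'o::wellorder. \<forall>x. x \<le> t"
    and unc: "uncountable {x::'o. x < omega1}"
    and cnt: "\<forall>x::'o. x < omega1 \<longrightarrow> countable {y. y < x}"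
    and cA: "countable \<A>" and mA: "\<forall>A\<in>\<A>. \<exists>b\<le>(a::'o). Fclass Y b A"
  shows "(ord_odd a \<longrightarrow> Fclass Y a (\<Union>\<A>)) \<and> (ord_even a \<longrightarrow> Fclass Y (osucc a) (\<Union>\<A>))"
proof (intro conjI impI)
  assume ev: "ord_even a"
  have ao: "a < osucc a" using osucc_gt[OF a] .
  have so: "osucc a < omega1" using osucc_less_omega1[OF top unc cnt a] .
  have z: "ord_zero < osucc a" using ord_zero_le[of a] ao by (meson le_less_trans)
  show "Fclass Y (osucc a) (\<Union>\<A>)"
    by (rule Fclass.union[OF z so osucc_odd[OF ev a] cA]) (use mA ao in \<open>meson le_less_trans\<close>)
next
  assume od: "ord_odd a"
  have "\<forall>A\<in>\<A>. \<exists>\<C>. countable \<C> \<and> \<Union>\<C> = A \<and> (\<forall>C\<in>\<C>. \<exists>b<a. Fclass Y b C)"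
  proof
    fix A assume "A \<in> \<A>"
    then obtain b where b: "b \<le> a" "Fclass Y b A" using mA by blast
    show "\<exists>\<C>. countable \<C> \<and> \<Union>\<C> = A \<and> (\<forall>C\<in>\<C>. \<exists>b<a. Fclass Y b C)"
    proof (cases "b = a")
      case False
      then have "b < a" using b by simp
      then show ?thesis using b by (intro exI[of _ "{A}"]) auto
    next
      case True
      then show ?thesis using Fclass_cases_lt[OF b(2)] a od odd_pos[OF od] unfolding ord_even_def by auto
    qed
  qed
  then have "\<exists>g. \<forall>A\<in>\<A>. countable (g A) \<and> \<Union>(g A) = A \<and> (\<forall>C\<in>g A. \<exists>b<a. Fclass Y b C)"
    by (rule bchoice)
  then obtain g where g: "\<forall>A\<in>\<A>. countable (g A) \<and> \<Union>(g A) = A \<and> (\<forall>C\<in>g A. \<exists>b<a. Fclass Y b C)"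
    by (elim exE)
  have g1: "\<And>A. A \<in> \<A> \<Longrightarrow> countable (g A)" and g2: "\<And>A. A \<in> \<A> \<Longrightarrow> \<Union>(g A) = A"
    and g3: "\<And>A C. A \<in> \<A> \<Longrightarrow> C \<in> g A \<Longrightarrow> \<exists>b<a. Fclass Y b C" using g by blast+
  have cU: "countable (\<Union>A\<in>\<A>. g A)" using cA g1 by (rule countable_UN)
  have mU: "\<forall>C\<in>(\<Union>A\<in>\<A>. g A). \<exists>b<a. Fclass Y b C" using g3 by blast
  have FU: "Fclass Y a (\<Union>(\<Union>A\<in>\<A>. g A))"
    by (rule Fclass.union[OF odd_pos[OF od] a od cU mU])
  have eqU: "(\<Union>(\<Union>A\<in>\<A>. g A)) = \<Union>\<A>"
  proof -
    have "(\<Union>(\<Union>A\<in>\<A>. g A)) = (\<Union>A\<in>\<A>. \<Union>(g A))" by blast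
    also have "\<dots> = (\<Union>A\<in>\<A>. A)" using g2 by simp
    finally show ?thesis by simp
  qed
  show "Fclass Y a (\<Union>\<A>)" using FU unfolding eqU .
qed

lemma K_analytic_lindelof:
  assumes XY: "X \<subseteq> topspace Y" and KA: "K_analytic_via Y X K f"
    and V: "\<forall>x\<in>X. openin Y (V x) \<and> x \<in> V x"
  shows "\<exists>N\<subseteq>X. countable N \<and> X \<subseteq> (\<Union>x\<in>N. V x)"
proof -
  have K: "compact_space K" and emb: "embedding_map (subtopology Y X) K f" and sK: "suslinF K (f ` X)"
    using KA unfolding K_analytic_via_def by auto
  obtain F where F: "\<forall>s. closedin K (F s)" and fX: "f ` X = (\<Union>\<sigma>::nat\<Rightarrow>nat. \<Inter>k. F (map \<sigma> [0..<Suc k]))"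
    using sK unfolding suslinF_def by blast
  have tX: "topspace (subtopology Y X) = X" using XY by (simp add: inf.absorb2)
  have hom: "homeomorphic_map (subtopology Y X) (subtopology K (f ` X)) f"
    using emb unfolding embedding_map_def tX .
  have inj: "inj_on f X" using hom unfolding homeomorphic_map_def tX by blast
  have "\<forall>x\<in>X. \<exists>W0. openin K W0 \<and> f ` (X \<inter> V x) = W0 \<inter> f ` X"
  proof
    fix x assume x: "x \<in> X"
    have "openin (subtopology Y X) (X \<inter> V x)" using V x by (simp add: openin_subtopology_Int2)
    then have "openin (subtopology K (f ` X)) (f ` (X \<inter> V x))"
      using homeomorphic_map_openness[OF hom] tX by (metis inf_le1)
    then show "\<exists>W0. openin K W0 \<and> f ` (X \<inter> V x) = W0 \<inter> f ` X"
      unfolding openin_subtopology by blast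
  qed
  then have "\<exists>Ox. \<forall>x\<in>X. openin K (Ox x) \<and> f ` (X \<inter> V x) = Ox x \<inter> f ` X" by (rule bchoice)
  then obtain Ox where Ox: "\<forall>x\<in>X. openin K (Ox x) \<and> f ` (X \<inter> V x) = Ox x \<inter> f ` X" by (elim exE)
  have U: "\<forall>U\<in>Ox ` X. openin K U" using Ox by blast
  have cov: "(\<Union>\<sigma>::nat\<Rightarrow>nat. \<Inter>k. F (map \<sigma> [0..<Suc k])) \<subseteq> \<Union>(Ox ` X)"
  proof
    fix z assume "z \<in> (\<Union>\<sigma>::nat\<Rightarrow>nat. \<Inter>k. F (map \<sigma> [0..<Suc k]))"
    then obtain x where x: "x \<in> X" "z = f x" unfolding fX[symmetric] by blast
    then have "z \<in> f ` (X \<inter> V x)" using V by blast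
    then have "z \<in> Ox x" using Ox x(1) by blast
    then show "z \<in> \<Union>(Ox ` X)" using x(1) by blast
  qed
  obtain \<V> where Vs: "\<V> \<subseteq> Ox ` X" "countable \<V>" "(\<Union>\<sigma>::nat\<Rightarrow>nat. \<Inter>k. F (map \<sigma> [0..<Suc k])) \<subseteq> \<Union>\<V>"
    using suslin_lindelof[OF K F U cov] by blast
  obtain N where N: "countable N" "N \<subseteq> X" "\<V> = Ox ` N"
    using countable_subset_image[of \<V> Ox X] Vs(1,2) by blast
  have "X \<subseteq> (\<Union>x\<in>N. V x)"
  proof
    fix z assume z: "z \<in> X"
    then have "f z \<in> \<Union>\<V>" using Vs(3) fX by blast
    then obtain n where n: "n \<in> N" "f z \<in> Ox n" using N(3) by blast
    then have "f z \<in> f ` (X \<inter> V n)" using Ox N(2) z by blast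
    then obtain v where v: "v \<in> X \<inter> V n" "f z = f v" by blast
    then have "z = v" using inj z unfolding inj_on_def by blast
    then show "z \<in> (\<Union>x\<in>N. V x)" using v n by blast
  qed
  then show ?thesis using N by blast
qed

lemma ord_sup_ub: "\<exists>t::'o::wellorder. \<forall>x. x \<le> t \<Longrightarrow> b \<in> S \<Longrightarrow> b \<le> ord_sup (S::'o set)"
proof -
  assume "\<exists>t::'o::wellorder. \<forall>x. x \<le> t" "b \<in> S"
  then obtain t :: 'o where t: "\<forall>x. x \<le> t" by blast
  have "\<forall>b\<in>S. b \<le> ord_sup S" unfolding ord_sup_def by (rule LeastI[of _ t]) (use t in blast)
  then show ?thesis using \<open>b \<in> S\<close> by blast
qed

lemma ord_sup_least: "\<forall>b\<in>S. b \<le> a \<Longrightarrow> ord_sup (S::'o::wellorder set) \<le> a"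
  unfolding ord_sup_def by (rule Least_le)

theorem lemma5p9:
  fixes Y :: "'a topology" and X :: "'a set"
    and K :: "'b topology" and f :: "'a \<Rightarrow> 'b"
    and T :: "'o::wellorder itself"
  assumes "omega1_plus_one T"
    and "tychonoff_space Y"
    and "X \<subseteq> topspace Y"
    and "K_analytic_via Y X K f"
  shows "Compl_loc T Y X \<le> Compl_cloc T Y X
       \<and> Compl_cloc T Y X \<le> Compl T Y X
       \<and> Compl T Y X \<le> osucc (Compl_loc T Y X)
       \<and> ((ord_odd (Compl_loc T Y X) \<or> ord_even (Compl T Y X)) \<longrightarrow>
            Compl_loc T Y X = Compl_cloc T Y X \<and> Compl_cloc T Y X = Compl T Y X)
       \<and> (compact_space Y \<longrightarrow>
            Compl T Y X = Compl_cloc T Y X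
          \<and> (\<forall>y\<in>topspace Y. Compl_at T Y X y \<le> Compl_cloc T Y X)
          \<and> (topspace Y \<noteq> {} \<longrightarrow> (\<exists>y\<in>topspace Y. Compl_at T Y X y = Compl_cloc T Y X)))"
proof -
  have top: "\<exists>t::'o. \<forall>x. x \<le> t" and unc: "uncountable {x::'o. x < omega1}"
    and cnt: "\<forall>x::'o. x < omega1 \<longrightarrow> countable {y. y < x}"
    using assms(1) unfolding omega1_plus_one_def by auto
  have H: "Hausdorff_space Y" using assms(2) unfolding tychonoff_space_def by blast
  have XY: "X \<subseteq> topspace Y" by (rule assms(3))
  have sX: "suslinF Y X" by (rule K_analytic_suslin[OF H XY assms(4)])
  have le_top: "x \<le> (omega1::'o)" for x using omega1_top[OF top] .
  have FC: "Fclass Y (Compl T Y (C \<inter> X)) (C \<inter> X)" if "closedin Y C" for C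
  proof -
    have "Fclass Y (omega1::'o) (C \<inter> X)" using suslin_Int_closed[OF sX that] by (rule Fclass.suslin)
    then show ?thesis unfolding Compl_def by (rule LeastI)
  qed
  have clX: "Y closure_of (topspace Y) \<inter> X = X" using XY by (simp add: inf.absorb2)
  have CX: "Fclass Y (Compl T Y X) X" using FC[of "topspace Y"] XY by (simp add: inf.absorb2)
  have nbtop: "neighbourhood Y (topspace Y) y" if "y \<in> topspace Y" for y
    unfolding neighbourhood_def using that by auto
  have at_att: "\<exists>U. neighbourhood Y U y \<and> Compl_at T Y X y = Compl T Y (Y closure_of U \<inter> X)"
    if y: "y \<in> topspace Y" for y
  proof -
    have "\<exists>a::'o. \<exists>U. neighbourhood Y U y \<and> a = Compl T Y (Y closure_of U \<inter> X)"
      using nbtop[OF y] by blast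
    then show ?thesis unfolding Compl_at_def by (rule LeastI_ex)
  qed
  have at_le: "Compl_at T Y X y \<le> Compl T Y X" if y: "y \<in> topspace Y" for y
  proof -
    have "\<exists>U. neighbourhood Y U y \<and> Compl T Y X = Compl T Y (Y closure_of U \<inter> X)"
      using nbtop[OF y] clX by metis
    then show ?thesis unfolding Compl_at_def by (rule Least_le)
  qed
  define loc where "loc = Compl_loc T Y X"
  define cloc where "cloc = Compl_cloc T Y X"
  define cpl where "cpl = Compl T Y X"
  have at_cloc: "Compl_at T Y X y \<le> cloc" if "y \<in> topspace Y" for y
    unfolding cloc_def Compl_cloc_def using that by (intro ord_sup_ub[OF top]) blast
  have at_loc: "Compl_at T Y X x \<le> loc" if "x \<in> X" for x
    unfolding loc_def Compl_loc_def using that by (intro ord_sup_ub[OF top]) blast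
  have c1: "loc \<le> cloc"
    unfolding loc_def Compl_loc_def using at_cloc XY by (intro ord_sup_least) blast
  have c2: "cloc \<le> cpl"
    unfolding cloc_def Compl_cloc_def cpl_def using at_le by (intro ord_sup_least) blast
  have key: "(ord_odd loc \<longrightarrow> Fclass Y loc X) \<and> (ord_even loc \<longrightarrow> Fclass Y (osucc loc) X)"
    if lt: "loc < omega1"
  proof -
    have "\<forall>x\<in>X. \<exists>U. neighbourhood Y U x \<and> Compl_at T Y X x = Compl T Y (Y closure_of U \<inter> X)"
      using at_att XY by blast
    then have "\<exists>U. \<forall>x\<in>X. neighbourhood Y (U x) x \<and> Compl_at T Y X x = Compl T Y (Y closure_of (U x) \<inter> X)"
      by (rule bchoice)
    then obtain U where U: "\<forall>x\<in>X. neighbourhood Y (U x) x \<and> Compl_at T Y X x = Compl T Y (Y closure_of (U x) \<inter> X)"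
      by (elim exE)
    have "\<forall>x\<in>X. \<exists>V. openin Y V \<and> x \<in> V \<and> V \<subseteq> U x" using U unfolding neighbourhood_def by blast
    then have "\<exists>V. \<forall>x\<in>X. openin Y (V x) \<and> x \<in> V x \<and> V x \<subseteq> U x" by (rule bchoice)
    then obtain V where V: "\<forall>x\<in>X. openin Y (V x) \<and> x \<in> V x \<and> V x \<subseteq> U x" by (elim exE)
    have "\<forall>x\<in>X. openin Y (V x) \<and> x \<in> V x" using V by blast
    then obtain N where N: "N \<subseteq> X" "countable N" "X \<subseteq> (\<Union>x\<in>N. V x)"
      using K_analytic_lindelof[OF XY assms(4)] by blast
    define \<A> where "\<A> = (\<lambda>x. Y closure_of (U x) \<inter> X) ` N"
    have cA: "countable \<A>" unfolding \<A>_def using N(2) by simp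
    have mA: "\<forall>A\<in>\<A>. \<exists>b\<le>loc. Fclass Y b A"
    proof
      fix A assume "A \<in> \<A>"
      then obtain x where x: "x \<in> N" "A = Y closure_of (U x) \<inter> X" unfolding \<A>_def by blast
      have xX: "x \<in> X" using x N(1) by blast
      have "Fclass Y (Compl T Y A) A" using FC[of "Y closure_of (U x)"] x(2) by simp
      moreover have "Compl T Y A \<le> loc" using U xX at_loc[OF xX] x(2) by simp
      ultimately show "\<exists>b\<le>loc. Fclass Y b A" by blast
    qed
    have UA: "\<Union>\<A> = X"
    proof
      show "\<Union>\<A> \<subseteq> X" unfolding \<A>_def by blast
      show "X \<subseteq> \<Union>\<A>"
      proof
        fix z assume z: "z \<in> X"
        then obtain x where x: "x \<in> N" "z \<in> V x" using N(3) by blast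
        have xX: "x \<in> X" using x N(1) by blast
        have "U x \<subseteq> topspace Y" using U xX unfolding neighbourhood_def by blast
        then have "U x \<subseteq> Y closure_of (U x)" by (rule closure_of_subset)
        then have "z \<in> Y closure_of (U x) \<inter> X" using V xX x(2) z by blast
        then show "z \<in> \<Union>\<A>" unfolding \<A>_def using x(1) by blast
      qed
    qed
    show ?thesis using Fclass_countable_union[OF lt top unc cnt cA mA] unfolding UA .
  qed
  have c3: "cpl \<le> osucc loc"
  proof (cases "loc < omega1")
    case True
    show ?thesis
    proof (cases "ord_odd loc")
      case True
      then have "cpl \<le> loc" using key[OF \<open>loc < omega1\<close>] unfolding cpl_def Compl_def
        by (blast intro: Least_le)
      then show ?thesis using osucc_ge[of loc] by simp
    next
      case False
      then have "ord_even loc" unfolding ord_even_def .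
      then show ?thesis using key[OF \<open>loc < omega1\<close>] unfolding cpl_def Compl_def
        by (blast intro: Least_le)
    qed
  next
    case False
    then have "loc = omega1" using le_top[of loc] by simp
    then show ?thesis using le_top[of cpl] osucc_ge[of loc] by simp
  qed
  have c4: "loc = cloc \<and> cloc = cpl" if par: "ord_odd loc \<or> ord_even cpl"
  proof (cases "loc < omega1")
    case False
    then have "loc = omega1" using le_top[of loc] by simp
    then show ?thesis using c1 c2 le_top[of cpl] le_top[of cloc] by (metis order.antisym)
  next
    case lt: True
    have "cpl \<le> loc"
    proof (cases "ord_odd loc")
      case True
      then show "cpl \<le> loc" using key[OF lt] unfolding cpl_def Compl_def by (blast intro: Least_le)
    next
      case False
      then have ev: "ord_even cpl" using par by blast
      have evl: "ord_even loc" using False unfolding ord_even_def .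
      show "cpl \<le> loc"
      proof (rule ccontr)
        assume "\<not> cpl \<le> loc"
        then have "loc < cpl" by simp
        then have "osucc loc \<le> cpl" by (rule osucc_least)
        then have "cpl = osucc loc" using c3 by simp
        moreover have "ord_odd (osucc loc)" using osucc_odd[OF evl lt] .
        ultimately show False using ev unfolding ord_even_def by simp
      qed
    qed
    then show ?thesis using c1 c2 by (meson order.antisym order.trans)
  qed
  have c5: "Compl T Y X = Compl_cloc T Y X
          \<and> (\<forall>y\<in>topspace Y. Compl_at T Y X y \<le> Compl_cloc T Y X)
          \<and> (topspace Y \<noteq> {} \<longrightarrow> (\<exists>y\<in>topspace Y. Compl_at T Y X y = Compl_cloc T Y X))"
    if cY: "compact_space Y"
  proof -
    have "\<forall>y\<in>topspace Y. \<exists>U. neighbourhood Y U y \<and> Compl_at T Y X y = Compl T Y (Y closure_of U \<inter> X)"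
      using at_att by blast
    then have "\<exists>U. \<forall>y\<in>topspace Y. neighbourhood Y (U y) y \<and> Compl_at T Y X y = Compl T Y (Y closure_of (U y) \<inter> X)"
      by (rule bchoice)
    then obtain U where U: "\<forall>y\<in>topspace Y. neighbourhood Y (U y) y \<and> Compl_at T Y X y = Compl T Y (Y closure_of (U y) \<inter> X)"
      by (elim exE)
    have "\<forall>y\<in>topspace Y. \<exists>V. openin Y V \<and> y \<in> V \<and> V \<subseteq> U y" using U unfolding neighbourhood_def by blast
    then have "\<exists>V. \<forall>y\<in>topspace Y. openin Y (V y) \<and> y \<in> V y \<and> V y \<subseteq> U y" by (rule bchoice)
    then obtain V where V: "\<forall>y\<in>topspace Y. openin Y (V y) \<and> y \<in> V y \<and> V y \<subseteq> U y" by (elim exE)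
    have "\<forall>W\<in>V ` topspace Y. openin Y W" "topspace Y \<subseteq> \<Union>(V ` topspace Y)" using V by blast+
    then obtain \<F> where \<F>: "finite \<F>" "\<F> \<subseteq> V ` topspace Y" "topspace Y \<subseteq> \<Union>\<F>"
      using cY unfolding compact_space_def compactin_def by meson
    obtain N where N: "N \<subseteq> topspace Y" "finite N" "\<F> = V ` N"
      using finite_subset_image[OF \<F>(1,2)] by blast
    have XN: "X = (\<Union>y\<in>N. Y closure_of (U y) \<inter> X)"
    proof
      show "X \<subseteq> (\<Union>y\<in>N. Y closure_of (U y) \<inter> X)"
      proof
        fix z assume z: "z \<in> X"
        then obtain y where y: "y \<in> N" "z \<in> V y" using \<F>(3) N(3) XY by blast
        have yY: "y \<in> topspace Y" using y N(1) by blast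
        have "U y \<subseteq> topspace Y" using U yY unfolding neighbourhood_def by blast
        then have "U y \<subseteq> Y closure_of (U y)" by (rule closure_of_subset)
        then show "z \<in> (\<Union>y\<in>N. Y closure_of (U y) \<inter> X)" using V yY y z by blast
      qed
    qed blast
    have aty: "Compl_at T Y X y \<le> cloc" if "y \<in> topspace Y" for y using at_cloc that .
    show ?thesis
    proof (cases "topspace Y = {}")
      case True
      then have "X = {}" using XY by blast
      have "Fclass Y (ord_zero::'o) X" using \<open>X = {}\<close> by (simp add: Fclass.closed)
      then have "cpl \<le> ord_zero" unfolding cpl_def Compl_def by (rule Least_le)
      then have "cpl = ord_zero" using ord_zero_le[of cpl] by simp
      moreover have "cloc \<le> cpl" by (rule c2)
      ultimately have "cloc = cpl" using ord_zero_le[of cloc] by simp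
      then show ?thesis using True aty unfolding cloc_def cpl_def by simp
    next
      case False
      then have "N \<noteq> {}" using \<F>(3) N(3) by blast
      define m where "m = Max ((\<lambda>y. Compl_at T Y X y) ` N)"
      have mm: "m \<in> (\<lambda>y. Compl_at T Y X y) ` N" unfolding m_def using N(2) \<open>N \<noteq> {}\<close> by simp
      then obtain y0 where y0: "y0 \<in> N" "m = Compl_at T Y X y0" by blast
      have mge: "Compl_at T Y X y \<le> m" if "y \<in> N" for y unfolding m_def using N(2) that by simp
      have "cpl \<le> m"
      proof (cases "m < omega1")
        case False
        then show ?thesis using le_top[of m] le_top[of cpl] by simp
      next
        case mlt: True
        have "Fclass Y m (\<Union>y\<in>M. Y closure_of (U y) \<inter> X)" if "M \<subseteq> N" for M
        proof -
          have "finite M" using N(2) that by (rule rev_finite_subset)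
          then show ?thesis using that
          proof (induction M rule: finite_induct)
            case empty
            have "Fclass Y (ord_zero::'o) {}" by (simp add: Fclass.closed)
            then have "Fclass Y m {}" using Fclass_mono ord_zero_le mlt by blast
            then show ?case by simp
          next
            case (insert y M)
            have yY: "y \<in> topspace Y" using insert.prems N(1) by blast
            have "Fclass Y (Compl T Y (Y closure_of (U y) \<inter> X)) (Y closure_of (U y) \<inter> X)"
              by (rule FC) simp
            moreover have "Compl T Y (Y closure_of (U y) \<inter> X) \<le> m"
              using U yY mge[of y] insert.prems by simp
            ultimately have "Fclass Y m (Y closure_of (U y) \<inter> X)" using Fclass_mono mlt by blast
            moreover have "Fclass Y m (\<Union>y\<in>M. Y closure_of (U y) \<inter> X)" using insert by blast
            ultimately show ?case using Fclass_Un[OF mlt] by simp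
          qed
        qed
        then have "Fclass Y m X" using XN by (metis order_refl)
        then show ?thesis unfolding cpl_def Compl_def by (rule Least_le)
      qed
      moreover have y0Y: "y0 \<in> topspace Y" using y0 N(1) by blast
      ultimately have "cpl \<le> Compl_at T Y X y0" using y0 by simp
      moreover have "Compl_at T Y X y0 \<le> cloc" using aty[OF y0Y] .
      ultimately have eq1: "cpl = cloc" and eq2: "Compl_at T Y X y0 = cloc" using c2 by auto
      show ?thesis using eq1 eq2 aty y0Y unfolding cloc_def cpl_def by blast
    qed
  qed
  show ?thesis using c1 c2 c3 c4 c5 unfolding loc_def cloc_def cpl_def by blast
qed

end
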